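(* Suppose $p\in\mathbb{C}[z_1,z_2]$ is semi-stable. Then all common zeros of $p$ and $\tilde p$ in $\mathbb{C}_\infty\times\mathbb{C}_\infty$ lie in $(\mathbb{D}\times\mathbb{D}^{-1})\cup\mathbb{T}^2\cup(\mathbb{D}^{-1}\times\mathbb{D})$.
   Context: $\mathbb{D}$ is the open unit disk, $\mathbb{T}$ the unit circle, $\mathbb{C}_\infty=\mathbb{C}\cup\{\infty\}$, $\mathbb{D}^{-1}=\{z\in\mathbb{C}:|z|>1\}\cup\{\infty\}$. For $p$ of bidegree $(n,m)$, $\tilde p(z)=z_1^nz_2^m\overline{p(1/\bar z_1,1/\bar z_2)}$; $p$ is semi-stable if it has no zeros in $\mathbb{D}^2$ and $p,\tilde p$ have no common factor. Zeros at infinity for a polynomial $f$ of bidegree $(n,m)$: $f(a,\infty)=0$ means $z_2^mf(a,1/z_2)$ vanishes at $z_2=0$; $f(\infty,b)=0$ means $z_1^nf(1/z_1,b)$ vanishes at $z_1=0$; $f(\infty,\infty)=0$ means $z_1^nz_2^mf(1/z_1,1/z_2)$ vanishes at $(0,0)$. *)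

theory Defs
  imports "HOL-Analysis.Analysis" "HOL-Computational_Algebra.Polynomial"
begin

text \<open>A polynomial in \<open>\<complex>[z1,z2]\<close> is represented as an element of \<open>(\<complex>[z1])[z2]\<close>:
  the outer variable is z2, the coefficients are polynomials in z1.\<close>

type_synonym bipoly = "complex poly poly"

definition bcoeff :: "bipoly \<Rightarrow> nat \<Rightarrow> nat \<Rightarrow> complex" where
  "bcoeff p i j = coeff (coeff p j) i"

definition eval2 :: "bipoly \<Rightarrow> complex \<Rightarrow> complex \<Rightarrow> complex" where
  "eval2 p a b = poly (map_poly (\<lambda>c. poly c a) p) b"

definition deg1 :: "bipoly \<Rightarrow> nat" where
  "deg1 p = (MAX j\<in>{..degree p}. degree (coeff p j))"

definition deg2 :: "bipoly \<Rightarrow> nat" where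
  "deg2 p = degree p"

text \<open>Reflection w.r.t. bidegree (n,m): \<open>z1^n z2^m conj(p(1/conj z1, 1/conj z2))\<close>.\<close>
definition refl2 :: "nat \<Rightarrow> nat \<Rightarrow> bipoly \<Rightarrow> bipoly" where
  "refl2 n m p = (\<Sum>i\<le>n. \<Sum>j\<le>m. monom (monom (cnj (bcoeff p (n - i) (m - j))) i) j)"

definition ptilde :: "bipoly \<Rightarrow> bipoly" where
  "ptilde p = refl2 (deg1 p) (deg2 p) p"

text \<open>Points of the Riemann sphere: \<open>None\<close> is \<open>\<infinity>\<close>.\<close>
type_synonym ext_complex = "complex option"

text \<open>Vanishing of f, regarded as of bidegree (n,m), at a point of \<open>\<complex>\<^sub>\<infinity> \<times> \<complex>\<^sub>\<infinity>\<close>.\<close>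
fun vanishes_at :: "nat \<Rightarrow> nat \<Rightarrow> bipoly \<Rightarrow> ext_complex \<Rightarrow> ext_complex \<Rightarrow> bool" where
  "vanishes_at n m f (Some a) (Some b) = (eval2 f a b = 0)"
| "vanishes_at n m f (Some a) None = (poly (coeff f m) a = 0)"
  \<comment> \<open>\<open>z2^m f(a,1/z2)\<close> at \<open>z2 = 0\<close>\<close>
| "vanishes_at n m f None (Some b) = ((\<Sum>j\<le>m. bcoeff f n j * b ^ j) = 0)"
  \<comment> \<open>\<open>z1^n f(1/z1,b)\<close> at \<open>z1 = 0\<close>\<close>
| "vanishes_at n m f None None = (bcoeff f n m = 0)"

definition in_disk :: "ext_complex \<Rightarrow> bool" where
  "in_disk z = (case z of Some a \<Rightarrow> norm a < 1 | None \<Rightarrow> False)"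

definition in_ext_disk :: "ext_complex \<Rightarrow> bool" where
  "in_ext_disk z = (case z of Some a \<Rightarrow> norm a > 1 | None \<Rightarrow> True)"

definition in_circle :: "ext_complex \<Rightarrow> bool" where
  "in_circle z = (case z of Some a \<Rightarrow> norm a = 1 | None \<Rightarrow> False)"

definition semi_stable :: "bipoly \<Rightarrow> bool" where
  "semi_stable p \<longleftrightarrow>
     (\<forall>a b. norm a < 1 \<longrightarrow> norm b < 1 \<longrightarrow> eval2 p a b \<noteq> 0) \<and>
     (\<forall>d. d dvd p \<longrightarrow> d dvd ptilde p \<longrightarrow> is_unit d)"

end

theory Submission
  imports Defs "HOL-Complex_Analysis.Complex_Analysis"
begin


lemma poly_sum_le:
  fixes q :: "complex poly"
  assumes "degree q \<le> N" shows "poly q x = (\<Sum>i\<le>N. coeff q i * x ^ i)"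
proof -
  have "poly q x = (\<Sum>i\<le>degree q. coeff q i * x ^ i)" by (rule poly_altdef)
  also have "\<dots> = (\<Sum>i\<le>N. coeff q i * x ^ i)"
    by (rule sum.mono_neutral_left) (use assms le_degree in force)+
  finally show ?thesis .
qed

lemma eval2_alt: "eval2 f x w = (\<Sum>j\<le>degree f. poly (coeff f j) x * w ^ j)"
proof -
  have "eval2 f x w = (\<Sum>j\<le>degree f. coeff (map_poly (\<lambda>c. poly c x) f) j * w ^ j)"
    unfolding eval2_def by (rule poly_sum_le) (rule map_poly_degree_leq)
  then show ?thesis by (simp add: coeff_map_poly)
qed

definition bounded2 :: "nat \<Rightarrow> nat \<Rightarrow> bipoly \<Rightarrow> bool" where
  "bounded2 n m f \<longleftrightarrow> (\<forall>i j. (i > n \<or> j > m) \<longrightarrow> bcoeff f i j = 0)"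

lemma eval2_sum:
  assumes "bounded2 n m f"
  shows "eval2 f a b = (\<Sum>i\<le>n. \<Sum>j\<le>m. bcoeff f i j * a ^ i * b ^ j)"
proof -
  have dm: "degree f \<le> m"
  proof (rule degree_le)
    show "\<forall>j>m. coeff f j = 0"
      using assms by (auto simp: bounded2_def bcoeff_def poly_eq_iff)
  qed
  have dn: "degree (coeff f j) \<le> n" for j
    by (rule degree_le) (use assms in \<open>auto simp: bounded2_def bcoeff_def\<close>)
  have "eval2 f a b = (\<Sum>j\<le>m. coeff (map_poly (\<lambda>c. poly c a) f) j * b ^ j)"
    unfolding eval2_def by (rule poly_sum_le) (use map_poly_degree_leq dm le_trans in blast)
  also have "\<dots> = (\<Sum>j\<le>m. (\<Sum>i\<le>n. bcoeff f i j * a ^ i) * b ^ j)"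
    by (simp add: coeff_map_poly poly_sum_le[OF dn] bcoeff_def)
  also have "\<dots> = (\<Sum>i\<le>n. \<Sum>j\<le>m. bcoeff f i j * a ^ i * b ^ j)"
    by (simp add: sum_distrib_right sum.swap[of _ "{..n}"])
  finally show ?thesis .
qed

lemma bounded_p: "bounded2 (deg1 p) (deg2 p) p"
  unfolding bounded2_def
proof (intro allI impI)
  fix i j assume h: "deg1 p < i \<or> deg2 p < j"
  show "bcoeff p i j = 0"
  proof (cases "j \<le> degree p")
    case True
    then have "degree (coeff p j) \<le> deg1 p" unfolding deg1_def by (intro Max_ge) auto
    with h True show ?thesis by (auto simp: bcoeff_def deg2_def coeff_eq_0)
  next
    case False then show ?thesis by (simp add: bcoeff_def coeff_eq_0)
  qed
qed

lemma bcoeff_refl2: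
  "bcoeff (refl2 n m f) i j = (if i \<le> n \<and> j \<le> m then cnj (bcoeff f (n - i) (m - j)) else 0)"
  by (simp add: refl2_def bcoeff_def coeff_sum coeff_monom if_distrib[where f="\<lambda>x. coeff x i"]
        sum.delta cong: if_cong) (auto intro!: sum.neutral)

lemma bounded_refl2: "bounded2 n m (refl2 n m f)"
  by (auto simp: bounded2_def bcoeff_refl2)

definition H :: "bipoly \<Rightarrow> nat \<Rightarrow> nat \<Rightarrow> complex \<times> complex \<Rightarrow> complex \<times> complex \<Rightarrow> complex" where
  "H f n m P Q = (\<Sum>i\<le>n. \<Sum>j\<le>m. bcoeff f i j * snd P ^ i * fst P ^ (n - i) * snd Q ^ j * fst Q ^ (m - j))"

lemma sum_rev: "(\<Sum>i\<le>(n::nat). g i) = (\<Sum>i\<le>n. g (n - i))"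
  by (rule sum.reindex_bij_witness[where i="\<lambda>i. n - i" and j="\<lambda>i. n - i"]) auto

lemma sum2_rev: "(\<Sum>i\<le>(n::nat). \<Sum>j\<le>(m::nat). g i j) = (\<Sum>i\<le>n. \<Sum>j\<le>m. g (n-i) (m-j))"
proof -
  have "(\<Sum>i\<le>n. \<Sum>j\<le>m. g i j) = (\<Sum>i\<le>n. \<Sum>j\<le>m. g (n-i) j)"
    by (rule sum_rev[of "\<lambda>i. \<Sum>j\<le>m. g i j"])
  also have "\<dots> = (\<Sum>i\<le>n. \<Sum>j\<le>m. g (n-i) (m-j))"
    by (rule sum.cong[OF refl], rule sum_rev)
  finally show ?thesis .
qed

lemma H_refl: "H (refl2 n m f) n m (s, a) (t, b) = cnj (H f n m (cnj a, cnj s) (cnj b, cnj t))"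
proof -
  have 1: "H f n m (cnj a, cnj s) (cnj b, cnj t) =
     (\<Sum>i\<le>n. \<Sum>j\<le>m. bcoeff f (n-i) (m-j) * cnj s ^ (n-i) * cnj a ^ (n - (n-i)) * cnj t ^ (m-j) * cnj b ^ (m - (m-j)))"
    unfolding H_def fst_conv snd_conv
    by (subst sum2_rev) (rule refl)
  also have "\<dots> = (\<Sum>i\<le>n. \<Sum>j\<le>m. bcoeff f (n-i) (m-j) * cnj s ^ (n-i) * cnj a ^ i * cnj t ^ (m-j) * cnj b ^ j)"
    by (intro sum.cong refl) auto
  finally have 2: "cnj (H f n m (cnj a, cnj s) (cnj b, cnj t)) =
      (\<Sum>i\<le>n. \<Sum>j\<le>m. cnj (bcoeff f (n-i) (m-j)) * s ^ (n-i) * a ^ i * t ^ (m-j) * b ^ j)"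
    by simp
  have 3: "H (refl2 n m f) n m (s, a) (t, b) =
      (\<Sum>i\<le>n. \<Sum>j\<le>m. cnj (bcoeff f (n-i) (m-j)) * s ^ (n-i) * a ^ i * t ^ (m-j) * b ^ j)"
    unfolding H_def fst_conv snd_conv by (intro sum.cong refl) (simp add: bcoeff_refl2 mult_ac)
  show ?thesis using 2 3 by simp
qed

lemma H_eval2:
  assumes "bounded2 n m f" shows "H f n m (1, a) (1, b) = eval2 f a b"
  by (simp add: H_def eval2_sum[OF assms])

lemma H_scale:
  assumes "s \<noteq> 0" "t \<noteq> 0"
  shows "H f n m (s, a) (t, b) = s ^ n * t ^ m * H f n m (1, a / s) (1, b / t)"
proof -
  have e: "x ^ i * s ^ (n - i) = s ^ n * (x / s) ^ i" if "i \<le> n" for x i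
  proof -
    have "s ^ n = s ^ i * s ^ (n - i)" using that by (simp add: power_add[symmetric])
    then show ?thesis using assms by (simp add: power_divide)
  qed
  have e2: "x ^ j * t ^ (m - j) = t ^ m * (x / t) ^ j" if "j \<le> m" for x j
  proof -
    have "t ^ m = t ^ j * t ^ (m - j)" using that by (simp add: power_add[symmetric])
    then show ?thesis using assms by (simp add: power_divide)
  qed
  have t: "c * a ^ i * s ^ (n - i) * b ^ j * t ^ (m - j) =
     s ^ n * t ^ m * (c * (a / s) ^ i * 1 ^ (n - i) * (b / t) ^ j * 1 ^ (m - j))"
    if "i \<le> n" "j \<le> m" for c i j
  proof -
    have "c * a ^ i * s ^ (n - i) * b ^ j * t ^ (m - j) = c * (a ^ i * s ^ (n - i)) * (b ^ j * t ^ (m - j))"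
      by (simp add: mult_ac)
    also have "\<dots> = c * (s ^ n * (a / s) ^ i) * (t ^ m * (b / t) ^ j)"
      using e[OF that(1)] e2[OF that(2)] by simp
    finally show ?thesis by (simp add: mult_ac)
  qed
  show ?thesis unfolding H_def sum_distrib_left fst_conv snd_conv
    by (intro sum.cong refl t) auto
qed



lemma poly_zero_on_open:
  fixes q :: "complex poly"
  assumes "open S" "S \<noteq> {}" "\<And>x. x \<in> S \<Longrightarrow> poly q x = 0"
  shows "q = 0"
proof (rule ccontr)
  assume "q \<noteq> 0"
  then have "finite {x. poly q x = 0}" by (rule poly_roots_finite)
  moreover have "S \<subseteq> {x. poly q x = 0}" using assms(3) by auto
  ultimately have "finite S" by (rule finite_subset[rotated])
  then show False using finite_imp_not_open assms(1,2) by blast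
qed

lemma cont_eval2:
  assumes "continuous_on S a" "continuous_on S b"
  shows "continuous_on S (\<lambda>q. eval2 f (a q) (b q))"
  unfolding eval2_alt using assms by (intro continuous_intros)

lemma poly_holo: "(\<lambda>x. poly (c::complex poly) x) holomorphic_on S"
  unfolding holomorphic_on_def field_differentiable_def
  by (meson has_field_derivative_at_within poly_DERIV)

lemma holo1: "(\<lambda>x. eval2 f x w) holomorphic_on S"
  unfolding eval2_alt by (intro holomorphic_intros poly_holo)

lemma holo2: "(\<lambda>w. eval2 f x w) holomorphic_on S"
  unfolding eval2_def by (rule poly_holo)

lemma unif_lim:
  fixes f :: "complex \<Rightarrow> complex \<Rightarrow> complex"
  assumes cont: "continuous_on UNIV (\<lambda>z. f (fst z) (snd z))" and K: "compact K"
    and xs: "xs \<longlonglongrightarrow> x0"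
  shows "uniform_limit K (\<lambda>n w. f (xs n) w) (\<lambda>w. f x0 w) sequentially"
proof (rule uniform_limitI)
  fix e :: real assume e: "e > 0"
  define A where "A = insert x0 (range xs)"
  have "compact A" unfolding A_def using xs by (rule compact_sequence_with_limit)
  then have "compact (A \<times> K)" using K by (rule compact_Times)
  then have "uniformly_continuous_on (A \<times> K) (\<lambda>z. f (fst z) (snd z))"
    using cont by (intro compact_uniformly_continuous) (auto intro: continuous_on_subset)
  then obtain d where d: "d > 0"
    and dd: "\<And>x x'. x \<in> A \<times> K \<Longrightarrow> x' \<in> A \<times> K \<Longrightarrow> dist x' x < d \<Longrightarrow>
               dist (f (fst x') (snd x')) (f (fst x) (snd x)) < e"
    unfolding uniformly_continuous_on_def using e by metis
  have "\<forall>\<^sub>F n in sequentially. dist (xs n) x0 < d"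
    using xs d by (rule tendstoD)
  then show "\<forall>\<^sub>F n in sequentially. \<forall>w\<in>K. dist (f (xs n) w) (f x0 w) < e"
  proof (rule eventually_mono)
    fix n assume n: "dist (xs n) x0 < d"
    show "\<forall>w\<in>K. dist (f (xs n) w) (f x0 w) < e"
    proof
      fix w assume w: "w \<in> K"
      have "dist (xs n, w) (x0, w) = dist (xs n) x0" by (simp add: dist_Pair_Pair)
      then have "dist (xs n, w) (x0, w) < d" using n by simp
      then show "dist (f (xs n) w) (f x0 w) < e"
        using dd[of "(x0, w)" "(xs n, w)"] w by (auto simp: A_def)
    qed
  qed
qed

definition rr :: "nat \<Rightarrow> real" where "rr n = 1 + - inverse (real (Suc n))"

lemma rr_lim: "(\<lambda>n. complex_of_real (rr n) * z) \<longlonglongrightarrow> z"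
proof -
  have "(\<lambda>n. complex_of_real (rr n) * z) \<longlonglongrightarrow> complex_of_real 1 * z"
    unfolding rr_def
    by (intro tendsto_mult tendsto_of_real LIMSEQ_inverse_real_of_nat_add_minus tendsto_const)
  then show ?thesis by simp
qed

lemma rr_norm: "norm (complex_of_real (rr n) * z) < 1" if "norm z \<le> 1"
proof -
  have i: "0 < inverse (real (Suc n))" "inverse (real (Suc n)) \<le> 1" by (auto simp: field_simps)
  then have "0 \<le> rr n" "rr n < 1" by (auto simp: rr_def)
  then have "norm (complex_of_real (rr n) * z) = rr n * norm z" by (simp add: norm_mult)
  also have "\<dots> \<le> rr n" using \<open>0 \<le> rr n\<close> that by (simp add: mult_left_le)
  finally show ?thesis using \<open>rr n < 1\<close> by simp
qed

lemma inv_cnj_unit: "norm z = 1 \<Longrightarrow> 1 / cnj z = z"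
proof -
  assume "norm z = 1"
  then have "z * cnj z = 1" using complex_norm_square[of z] by simp
  then show ?thesis by (metis complex_cnj_zero_iff divide_eq_eq mult_cancel_left1 mult.commute one_neq_zero)
qed

lemma tilde_eval:
  assumes "z \<noteq> 0" "w \<noteq> 0"
  shows "eval2 (ptilde p) z w = cnj (cnj z ^ deg1 p * cnj w ^ deg2 p * eval2 p (1 / cnj z) (1 / cnj w))"
proof -
  have "eval2 (ptilde p) z w = H (ptilde p) (deg1 p) (deg2 p) (1, z) (1, w)"
    unfolding ptilde_def by (rule H_eval2[symmetric]) (rule bounded_refl2)
  also have "\<dots> = cnj (H p (deg1 p) (deg2 p) (cnj z, 1) (cnj w, 1))"
    unfolding ptilde_def by (simp add: H_refl)
  also have "H p (deg1 p) (deg2 p) (cnj z, 1) (cnj w, 1) = cnj z ^ deg1 p * cnj w ^ deg2 p * H p (deg1 p) (deg2 p) (1, 1 / cnj z) (1, 1 / cnj w)"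
    using assms by (intro H_scale) auto
  also have "H p (deg1 p) (deg2 p) (1, 1 / cnj z) (1, 1 / cnj w) = eval2 p (1 / cnj z) (1 / cnj w)"
    by (rule H_eval2) (rule bounded_p)
  finally show ?thesis .
qed

lemma eval2_const: "eval2 f z w = poly (poly f [:w:]) z"
proof -
  have "poly f [:w:] = (\<Sum>j\<le>degree f. coeff f j * [:w:] ^ j)" by (rule poly_altdef)
  then show ?thesis by (simp add: eval2_alt poly_sum)
qed

lemma coreA:
  assumes ss: "semi_stable p" and z0: "norm z0 = 1" and w0: "norm w0 < 1"
  shows "eval2 p z0 w0 \<noteq> 0"
proof
  assume 0: "eval2 p z0 w0 = 0"
  have nz: "eval2 p a b \<noteq> 0" if "norm a < 1" "norm b < 1" for a b
    using ss that unfolding semi_stable_def by blast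
  have cst: "(\<lambda>w. eval2 p z0 w) constant_on ball 0 1"
  proof (rule ccontr)
    assume nc: "\<not> (\<lambda>w. eval2 p z0 w) constant_on ball 0 1"
    have "(\<lambda>w. eval2 p z0 w) w0 \<noteq> 0"
    proof (rule Hurwitz_no_zeros[of "ball 0 1" "\<lambda>n w. eval2 p (complex_of_real (rr n) * z0) w" "\<lambda>w. eval2 p z0 w" w0])
      show "(\<lambda>w. eval2 p (complex_of_real (rr n) * z0) w) holomorphic_on ball 0 1" for n
        by (rule holo2)
      show "(\<lambda>w. eval2 p z0 w) holomorphic_on ball 0 1" by (rule holo2)
      show "uniform_limit K (\<lambda>n w. eval2 p (complex_of_real (rr n) * z0) w) (\<lambda>w. eval2 p z0 w) sequentially"
        if "compact K" "K \<subseteq> ball 0 1" for K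
        by (rule unif_lim[OF _ that(1) rr_lim]) (intro cont_eval2 continuous_intros)
      show "eval2 p (complex_of_real (rr n) * z0) w \<noteq> 0" if "w \<in> ball 0 1" for n w
        using that z0 by (intro nz rr_norm) auto
    qed (use nc w0 in auto)
    then show False using 0 by simp
  qed
  then obtain c where c: "\<And>w. w \<in> ball 0 1 \<Longrightarrow> eval2 p z0 w = c" unfolding constant_on_def by blast
  have "c = 0" using c[of w0] w0 0 by auto
  have m0: "map_poly (\<lambda>c. poly c z0) p = 0"
    by (rule poly_zero_on_open[of "ball 0 1"]) (use c \<open>c = 0\<close> in \<open>auto simp: eval2_def\<close>)
  have cp: "poly (coeff p j) z0 = 0" for j
    using arg_cong[OF m0, of "\<lambda>q. coeff q j"] by (simp add: coeff_map_poly)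
  have "eval2 p z0 x = 0" for x by (simp add: eval2_def m0)
  then have "eval2 (ptilde p) z0 w = 0" if "w \<noteq> 0" for w
  proof -
    have "z0 \<noteq> 0" using z0 by auto
    then show ?thesis using \<open>\<And>x. eval2 p z0 x = 0\<close> by (simp add: tilde_eval[OF _ that] inv_cnj_unit[OF z0])
  qed
  then have m1: "map_poly (\<lambda>c. poly c z0) (ptilde p) = 0"
    by (intro poly_zero_on_open[of "- {0}"]) (auto simp: eval2_def)
  have cq: "poly (coeff (ptilde p) j) z0 = 0" for j
    using arg_cong[OF m1, of "\<lambda>q. coeff q j"] by (simp add: coeff_map_poly)
  have d1: "[:[:-z0, 1:]:] dvd p" using cp by (simp add: const_poly_dvd_iff poly_eq_0_iff_dvd)
  have d2: "[:[:-z0, 1:]:] dvd ptilde p" using cq by (simp add: const_poly_dvd_iff poly_eq_0_iff_dvd)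
  have "is_unit [:[:-z0, 1:]:]" using ss d1 d2 unfolding semi_stable_def by blast
  then have "is_unit [:-z0, 1:]" by (simp add: is_unit_const_poly_iff)
  then show False by (auto simp: is_unit_poly_iff)
qed

lemma coreB:
  assumes ss: "semi_stable p" and z0: "norm z0 < 1" and w0: "norm w0 = 1"
  shows "eval2 p z0 w0 \<noteq> 0"
proof
  assume 0: "eval2 p z0 w0 = 0"
  have nz: "eval2 p a b \<noteq> 0" if "norm a < 1" "norm b < 1" for a b
    using ss that unfolding semi_stable_def by blast
  have cst: "(\<lambda>z. eval2 p z w0) constant_on ball 0 1"
  proof (rule ccontr)
    assume nc: "\<not> (\<lambda>z. eval2 p z w0) constant_on ball 0 1"
    have "(\<lambda>z. eval2 p z w0) z0 \<noteq> 0"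
    proof (rule Hurwitz_no_zeros[of "ball 0 1" "\<lambda>n z. eval2 p z (complex_of_real (rr n) * w0)" "\<lambda>z. eval2 p z w0" z0])
      show "(\<lambda>z. eval2 p z (complex_of_real (rr n) * w0)) holomorphic_on ball 0 1" for n
        by (rule holo1)
      show "(\<lambda>z. eval2 p z w0) holomorphic_on ball 0 1" by (rule holo1)
      show "uniform_limit K (\<lambda>n z. eval2 p z (complex_of_real (rr n) * w0)) (\<lambda>z. eval2 p z w0) sequentially"
        if "compact K" "K \<subseteq> ball 0 1" for K
        using unif_lim[of "\<lambda>w z. eval2 p z w", OF _ that(1) rr_lim]
        by (simp add: cont_eval2 continuous_intros)
      show "eval2 p z (complex_of_real (rr n) * w0) \<noteq> 0" if "z \<in> ball 0 1" for n z
        using that w0 by (intro nz rr_norm) auto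
    qed (use nc z0 in auto)
    then show False using 0 by simp
  qed
  then obtain c where c: "\<And>z. z \<in> ball 0 1 \<Longrightarrow> eval2 p z w0 = c" unfolding constant_on_def by blast
  have "c = 0" using c[of z0] z0 0 by auto
  have m0: "poly p [:w0:] = 0"
    by (rule poly_zero_on_open[of "ball 0 1"]) (use c \<open>c = 0\<close> in \<open>auto simp: eval2_const\<close>)
  have "eval2 p x w0 = 0" for x by (simp add: eval2_const m0)
  then have "eval2 (ptilde p) z w0 = 0" if "z \<noteq> 0" for z
  proof -
    have "w0 \<noteq> 0" using w0 by auto
    then show ?thesis using \<open>\<And>x. eval2 p x w0 = 0\<close> by (simp add: tilde_eval[OF that] inv_cnj_unit[OF w0])
  qed
  then have m1: "poly (ptilde p) [:w0:] = 0"
    by (intro poly_zero_on_open[of "- {0}"]) (auto simp: eval2_const)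
  have d1: "[:-[:w0:], 1:] dvd p" using m0 by (simp add: poly_eq_0_iff_dvd)
  have d2: "[:-[:w0:], 1:] dvd ptilde p" using m1 by (simp add: poly_eq_0_iff_dvd)
  have "is_unit [:-[:w0:], 1:]" using ss d1 d2 unfolding semi_stable_def by blast
  then show False by (auto simp: is_unit_poly_iff)
qed



fun hom :: "ext_complex \<Rightarrow> complex \<times> complex" where
  "hom (Some a) = (1, a)" | "hom None = (0, 1)"

lemma sum_pow0: "(\<Sum>j\<le>m. X j * (0::complex) ^ (m - j)) = X m"
proof -
  have "(\<Sum>j\<le>m. X j * (0::complex) ^ (m - j)) = (\<Sum>j\<le>m. if j = m then X j else 0)"
    by (intro sum.cong refl) (auto simp: power_0_left)
  then show ?thesis by simp
qed

lemma H_inf2: "H f n m (s, a) (0, 1) = (\<Sum>i\<le>n. bcoeff f i m * a ^ i * s ^ (n - i))"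
  unfolding H_def fst_conv snd_conv
  using sum_pow0[of "\<lambda>j. bcoeff f _ j * a ^ _ * s ^ (n - _)" m]
  by (simp add: mult.assoc)

lemma H_inf1: "H f n m (0, 1) (t, b) = (\<Sum>j\<le>m. bcoeff f n j * b ^ j * t ^ (m - j))"
proof -
  have "H f n m (0, 1) (t, b) = (\<Sum>i\<le>n. (\<Sum>j\<le>m. bcoeff f i j * b ^ j * t ^ (m - j)) * 0 ^ (n - i))"
    unfolding H_def fst_conv snd_conv sum_distrib_right by (intro sum.cong refl) (simp add: mult_ac)
  also have "\<dots> = (\<Sum>j\<le>m. bcoeff f n j * b ^ j * t ^ (m - j))" by (rule sum_pow0)
  finally show ?thesis .
qed

lemma vanish_H:
  assumes b: "bounded2 n m f"
  shows "vanishes_at n m f z w \<longleftrightarrow> H f n m (hom z) (hom w) = 0"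
proof (cases z; cases w)
  fix a b assume "z = Some a" "w = Some b"
  then show ?thesis using H_eval2[OF assms] by simp
next
  fix a assume zw: "z = Some a" "w = None"
  have "degree (coeff f m) \<le> n"
    by (rule degree_le) (use b in \<open>auto simp: bounded2_def bcoeff_def\<close>)
  then have "poly (coeff f m) a = (\<Sum>i\<le>n. bcoeff f i m * a ^ i)"
    by (simp add: poly_sum_le bcoeff_def)
  then show ?thesis using zw by (simp add: H_inf2)
next
  fix b assume zw: "z = None" "w = Some b"
  then show ?thesis by (simp add: H_inf1)
next
  assume zw: "z = None" "w = None"
  then show ?thesis by (simp add: H_inf1 sum_pow0)
qed

definition cD :: "complex \<times> complex \<Rightarrow> bool" where "cD P \<longleftrightarrow> norm (snd P) < norm (fst P)"
definition cT :: "complex \<times> complex \<Rightarrow> bool" where "cT P \<longleftrightarrow> norm (snd P) = norm (fst P) \<and> fst P \<noteq> 0"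
definition cE :: "complex \<times> complex \<Rightarrow> bool" where "cE P \<longleftrightarrow> norm (snd P) > norm (fst P)"

definition sig :: "complex \<times> complex \<Rightarrow> complex \<times> complex" where
  "sig P = (cnj (snd P), cnj (fst P))"

lemma class_hom:
  "in_disk z \<longleftrightarrow> cD (hom z)" "in_circle z \<longleftrightarrow> cT (hom z)" "in_ext_disk z \<longleftrightarrow> cE (hom z)"
  by (cases z; simp add: in_disk_def in_circle_def in_ext_disk_def cD_def cT_def cE_def)+

lemma trich: "cD (hom z) \<or> cT (hom z) \<or> cE (hom z)"
  by (cases z) (auto simp: cD_def cT_def cE_def)

lemma sig_class: "cD (sig P) \<longleftrightarrow> cE P" "cE (sig P) \<longleftrightarrow> cD P" "cT P \<Longrightarrow> cT (sig P)"
  by (auto simp: cD_def cT_def cE_def sig_def)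

lemma keyK:
  assumes ss: "semi_stable p"
    and P: "cD P \<or> cT P" and Q: "cD Q \<or> cT Q" and nTT: "\<not> (cT P \<and> cT Q)"
  shows "H p (deg1 p) (deg2 p) P Q \<noteq> 0"
proof -
  obtain s a t b where PQ: "P = (s, a)" "Q = (t, b)" by (cases P, cases Q)
  have s: "s \<noteq> 0" using P PQ by (auto simp: cD_def cT_def)
  have t: "t \<noteq> 0" using Q PQ by (auto simp: cD_def cT_def)
  have e: "H p (deg1 p) (deg2 p) P Q = s ^ deg1 p * t ^ deg2 p * eval2 p (a / s) (b / t)"
    unfolding PQ by (simp add: H_scale[OF s t] H_eval2[OF bounded_p])
  have nz: "eval2 p x y \<noteq> 0" if "norm x < 1" "norm y < 1" for x y
    using ss that unfolding semi_stable_def by blast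
  have ns: "norm s > 0" "norm t > 0" using s t by auto
  have na: "norm (a / s) < 1 \<or> norm (a / s) = 1"
  proof (cases "cD P")
    case True
    then have "norm a < norm s" by (simp add: cD_def PQ)
    then show ?thesis using ns by (simp add: norm_divide)
  next
    case False
    then have "norm a = norm s" using P by (simp add: cT_def PQ)
    then show ?thesis using ns by (simp add: norm_divide)
  qed
  have nb: "norm (b / t) < 1 \<or> norm (b / t) = 1"
  proof (cases "cD Q")
    case True
    then have "norm b < norm t" by (simp add: cD_def PQ)
    then show ?thesis using ns by (simp add: norm_divide)
  next
    case False
    then have "norm b = norm t" using Q by (simp add: cT_def PQ)
    then show ?thesis using ns by (simp add: norm_divide)
  qed
  have nab: "\<not> (norm (a / s) = 1 \<and> norm (b / t) = 1)"
  proof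
    assume "norm (a / s) = 1 \<and> norm (b / t) = 1"
    then have "norm a = norm s" "norm b = norm t" using ns by (auto simp: norm_divide)
    then have "cT P" "cT Q" using s t by (auto simp: cT_def PQ)
    then show False using nTT by blast
  qed
  have "eval2 p (a / s) (b / t) \<noteq> 0"
    using na nb nab nz[of "a / s" "b / t"] coreA[OF ss, of "a / s" "b / t"] coreB[OF ss, of "a / s" "b / t"]
    by fastforce
  then show ?thesis using e s t by simp
qed

theorem lemma10p1:
  fixes p :: bipoly and z w :: ext_complex
  assumes "semi_stable p"
    and "vanishes_at (deg1 p) (deg2 p) p z w"
    and "vanishes_at (deg1 p) (deg2 p) (ptilde p) z w"
  shows "(in_disk z \<and> in_ext_disk w) \<or> (in_circle z \<and> in_circle w) \<or>
         (in_ext_disk z \<and> in_disk w)"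
proof -
  define P where "P = hom z"
  define Q where "Q = hom w"
  have h1: "H p (deg1 p) (deg2 p) P Q = 0"
    using assms(2) vanish_H[OF bounded_p] unfolding P_def Q_def by blast
  have "H (ptilde p) (deg1 p) (deg2 p) P Q = 0"
    using assms(3) vanish_H[OF bounded_refl2] unfolding P_def Q_def ptilde_def by blast
  then have h2: "H p (deg1 p) (deg2 p) (sig P) (sig Q) = 0"
    unfolding ptilde_def sig_def by (cases P; cases Q) (simp add: H_refl)
  have tP: "cD P \<or> cT P \<or> cE P" and tQ: "cD Q \<or> cT Q \<or> cE Q"
    unfolding P_def Q_def by (rule trich)+
  have k1: False if "cD P \<or> cT P" "cD Q \<or> cT Q" "\<not> (cT P \<and> cT Q)"
    using keyK[OF assms(1) that] h1 by simp
  have k2: False if "cE P \<or> cT P" "cE Q \<or> cT Q" "\<not> (cT P \<and> cT Q)"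
  proof -
    have "cD (sig P) \<or> cT (sig P)" "cD (sig Q) \<or> cT (sig Q)" using that sig_class by blast+
    moreover have "\<not> (cT (sig P) \<and> cT (sig Q))"
      using that by (auto simp: cT_def cE_def cD_def sig_def)
    ultimately show False using keyK[OF assms(1)] h2 by blast
  qed
  have ex: "\<not> (cD X \<and> cT X)" "\<not> (cE X \<and> cT X)" "\<not> (cD X \<and> cE X)" for X
    by (auto simp: cD_def cT_def cE_def)
  have "(cD P \<and> cE Q) \<or> (cT P \<and> cT Q) \<or> (cE P \<and> cD Q)"
    using tP tQ
    apply (elim disjE)
    using k1 k2 ex[of P] ex[of Q] by blast+
  then show ?thesis unfolding P_def Q_def class_hom .
qed

end
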